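(* For all FDSs $A,B$, $\widetilde{A}\,\widetilde{B}=\widetilde{AB}$ (isomorphism of forests).
   Context: A finite dynamical system (FDS) is a function $A:S_A\to S_A$ on a finite set; the product $AB$ acts on $S_A\times S_B$ by $(a,b)\mapsto(A(a),B(b))$. Write $A^{\circ m}$ for the $m$-fold iterate of $A$; a state $s$ is a cycle state if $A^{\circ m}(s)=s$ for some $m>0$. The unrolling $\widetilde{A}$ is the forest with vertex set $\{(s,k)\in S_A\times\mathbb{N}: A^{\circ k}(s)\text{ is a cycle state}\}$ and an arc $(s,k)\to(A(s),k-1)$ for each such vertex with $k\ge1$; the roots are the vertices $(a,0)$. A forest is a disjoint union of rooted in-trees (arcs towards the root); the depth of a vertex is its distance to the root of its tree. The product of forests $\mathbf{F},\mathbf{G}$ has vertex set $\{(x,y):x\in\mathbf{F},y\in\mathbf{G},\operatorname{depth}(x)=\operatorname{depth}(y)\}$ and an arc $(x,y)\to(x',y')$ whenever $x\to x'$ and $y\to y'$ are arcs of $\mathbf{F}$ and $\mathbf{G}$. *)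

theory Defs
  imports Main
begin

text \<open>A finite dynamical system is a function on a finite type (the state set is UNIV).\<close>

definition cycle_state :: "('a \<Rightarrow> 'a) \<Rightarrow> 'a \<Rightarrow> bool" where
  "cycle_state A s \<longleftrightarrow> (\<exists>m>0. (A ^^ m) s = s)"

definition fds_prod :: "('a \<Rightarrow> 'a) \<Rightarrow> ('b \<Rightarrow> 'b) \<Rightarrow> ('a \<times> 'b \<Rightarrow> 'a \<times> 'b)" where
  "fds_prod A B = (\<lambda>(a, b). (A a, B b))"

type_synonym 'v forest = "'v set \<times> ('v \<times> 'v) set"

definition verts :: "'v forest \<Rightarrow> 'v set" where "verts F = fst F"
definition arcs :: "'v forest \<Rightarrow> ('v \<times> 'v) set" where "arcs F = snd F"

definition is_root :: "'v forest \<Rightarrow> 'v \<Rightarrow> bool" where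
  "is_root F r \<longleftrightarrow> r \<in> verts F \<and> (\<forall>y. (r, y) \<notin> arcs F)"

definition depth :: "'v forest \<Rightarrow> 'v \<Rightarrow> nat" where
  "depth F x = (LEAST n. \<exists>r. is_root F r \<and> (x, r) \<in> arcs F ^^ n)"

definition unrolling :: "('a \<Rightarrow> 'a) \<Rightarrow> ('a \<times> nat) forest" where
  "unrolling A =
     (let V = {(s, k). cycle_state A ((A ^^ k) s)}
      in (V, {((s, k), (A s, k - 1)) | s k. (s, k) \<in> V \<and> k \<ge> 1}))"

definition forest_prod :: "'v forest \<Rightarrow> 'w forest \<Rightarrow> ('v \<times> 'w) forest" where
  "forest_prod F G =
     (let V = {(x, y). x \<in> verts F \<and> y \<in> verts G \<and> depth F x = depth G y}
      in (V, {((x, y), (x', y')) | x y x' y'.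
                (x, y) \<in> V \<and> (x', y') \<in> V \<and> (x, x') \<in> arcs F \<and> (y, y') \<in> arcs G}))"

definition forest_iso :: "'v forest \<Rightarrow> 'w forest \<Rightarrow> bool" where
  "forest_iso F G \<longleftrightarrow> (\<exists>f. bij_betw f (verts F) (verts G) \<and>
      (\<forall>x\<in>verts F. \<forall>y\<in>verts F. (x, y) \<in> arcs F \<longleftrightarrow> (f x, f y) \<in> arcs G))"

end

theory Submission
  imports Defs
begin

lemma verts_unr: "verts (unrolling A) = {(s, k). cycle_state A ((A ^^ k) s)}"
  by (simp add: unrolling_def verts_def Let_def)

lemma arcs_unr: "((s,k), y) \<in> arcs (unrolling A) \<longleftrightarrow>
   cycle_state A ((A ^^ k) s) \<and> k \<ge> 1 \<and> y = (A s, k - 1)"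
  by (auto simp add: unrolling_def arcs_def Let_def)

lemma vert_step: "cycle_state A ((A ^^ k) s) \<Longrightarrow> k \<ge> 1 \<Longrightarrow> cycle_state A ((A ^^ (k - 1)) (A s))"
proof -
  assume "cycle_state A ((A ^^ k) s)" "k \<ge> 1"
  then obtain j where "k = Suc j" by (cases k) auto
  with \<open>cycle_state A ((A ^^ k) s)\<close> show ?thesis by (simp add: funpow_Suc_right del: funpow.simps)
qed

lemma relpow_unr:
  "cycle_state A ((A ^^ k) s) \<Longrightarrow>
   ((s,k), y) \<in> arcs (unrolling A) ^^ n \<longleftrightarrow> n \<le> k \<and> y = ((A ^^ n) s, k - n)"
proof (induction n arbitrary: s k)
  case 0
  then show ?case by auto
next
  case (Suc n)
  show ?case
  proof
    assume "((s,k), y) \<in> arcs (unrolling A) ^^ Suc n"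
    then obtain z where z: "((s,k), z) \<in> arcs (unrolling A)" "(z, y) \<in> arcs (unrolling A) ^^ n"
      by (blast dest: relpow_Suc_D2)
    have "cycle_state A ((A ^^ k) s) \<and> k \<ge> 1 \<and> z = (A s, k - 1)"
      using z(1) by (simp only: arcs_unr)
    then have k: "k \<ge> 1" "z = (A s, k - 1)" by auto
    have c: "cycle_state A ((A ^^ (k - 1)) (A s))" by (rule vert_step[OF Suc.prems k(1)])
    from Suc.IH[OF c] z k have "n \<le> k - 1 \<and> y = ((A ^^ n) (A s), k - 1 - n)" by simp
    then show "Suc n \<le> k \<and> y = ((A ^^ Suc n) s, k - Suc n)" using k
      by (auto simp add: funpow_swap1)
  next
    assume h: "Suc n \<le> k \<and> y = ((A ^^ Suc n) s, k - Suc n)"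
    have k: "k \<ge> 1" using h by simp
    have c: "cycle_state A ((A ^^ (k - 1)) (A s))" by (rule vert_step[OF Suc.prems k(1)])
    have a: "((s,k), (A s, k - 1)) \<in> arcs (unrolling A)" using Suc.prems k by (simp add: arcs_unr)
    have "((A s, k - 1), y) \<in> arcs (unrolling A) ^^ n"
      using Suc.IH[OF c] h by (auto simp add: funpow_swap1)
    then show "((s,k), y) \<in> arcs (unrolling A) ^^ Suc n" by (rule relpow_Suc_I2[OF a])
  qed
qed

lemma root_unr: "is_root (unrolling A) (s,k) \<longleftrightarrow> cycle_state A ((A ^^ k) s) \<and> k = 0"
  unfolding is_root_def using arcs_unr[where A=A and s=s and k=k] verts_unr[of A] by auto

lemma depth_unr:
  assumes "cycle_state A ((A ^^ k) s)"
  shows "depth (unrolling A) (s,k) = k"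
  unfolding depth_def
proof (rule Least_equality)
  have "cycle_state A ((A ^^ 0) ((A ^^ k) s))" using assms by simp
  then have "is_root (unrolling A) ((A ^^ k) s, 0)" by (simp add: root_unr)
  then show "\<exists>r. is_root (unrolling A) r \<and> ((s, k), r) \<in> arcs (unrolling A) ^^ k"
    using relpow_unr[OF assms, of "((A ^^ k) s, 0)" k] by auto
next
  fix n assume "\<exists>r. is_root (unrolling A) r \<and> ((s, k), r) \<in> arcs (unrolling A) ^^ n"
  then obtain r where "is_root (unrolling A) r" "((s, k), r) \<in> arcs (unrolling A) ^^ n" by blast
  then have "n \<le> k" "r = ((A ^^ n) s, k - n)" using relpow_unr[OF assms] by blast+
  with \<open>is_root (unrolling A) r\<close> show "k \<le> n" by (simp add: root_unr)
qed

lemma funpow_prod: "(fds_prod A B ^^ k) (s, t) = ((A ^^ k) s, (B ^^ k) t)"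
  by (induction k) (auto simp: fds_prod_def)

lemma fds_prod_apply: "fds_prod A B (s, t) = (A s, B t)"
  by (simp add: fds_prod_def)

lemma funpow_mult_fix: "(A ^^ m) s = s \<Longrightarrow> (A ^^ (m * n)) s = s"
  by (induction n) (auto simp: funpow_add simp del: funpow.simps)

lemma cycle_prod: "cycle_state (fds_prod A B) (s, t) \<longleftrightarrow> cycle_state A s \<and> cycle_state B t"
proof
  assume "cycle_state (fds_prod A B) (s, t)"
  then show "cycle_state A s \<and> cycle_state B t"
    unfolding cycle_state_def funpow_prod by auto
next
  assume "cycle_state A s \<and> cycle_state B t"
  then obtain m1 m2 where "m1 > 0" "(A ^^ m1) s = s" "m2 > 0" "(B ^^ m2) t = t"
    unfolding cycle_state_def by blast
  then have "(A ^^ (m1 * m2)) s = s" "(B ^^ (m2 * m1)) t = t" "m1 * m2 > 0"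
    using funpow_mult_fix by auto
  then show "cycle_state (fds_prod A B) (s, t)"
    unfolding cycle_state_def funpow_prod by (metis mult.commute)
qed

lemma verts_prod: "verts (forest_prod (unrolling A) (unrolling B)) =
   {((s,k),(t,j)). cycle_state A ((A ^^ k) s) \<and> cycle_state B ((B ^^ j) t) \<and> k = j}"
  by (auto simp: forest_prod_def verts_def[of "(_, _)"] Let_def verts_unr depth_unr)

lemma arcs_prod: "arcs (forest_prod F G) = {((x, y), (x', y')) | x y x' y'.
       (x, y) \<in> verts (forest_prod F G) \<and> (x', y') \<in> verts (forest_prod F G)
        \<and> (x, x') \<in> arcs F \<and> (y, y') \<in> arcs G}"
  by (simp add: forest_prod_def Let_def arcs_def verts_def)

theorem mainTheorem14:
  fixes A :: "'a::finite \<Rightarrow> 'a" and B :: "'b::finite \<Rightarrow> 'b"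
  shows "forest_iso (forest_prod (unrolling A) (unrolling B)) (unrolling (fds_prod A B))"
  unfolding forest_iso_def
proof (intro exI conjI ballI)
  let ?f = "\<lambda>((s::'a,k::nat),(t::'b,j::nat)). ((s,t),k)"
  show "bij_betw ?f (verts (forest_prod (unrolling A) (unrolling B))) (verts (unrolling (fds_prod A B)))"
    unfolding bij_betw_def verts_prod verts_unr
  proof
    show "inj_on ?f {((s,k),(t,j)). cycle_state A ((A ^^ k) s) \<and> cycle_state B ((B ^^ j) t) \<and> k = j}"
      by (auto simp: inj_on_def)
    show "?f ` {((s,k),(t,j)). cycle_state A ((A ^^ k) s) \<and> cycle_state B ((B ^^ j) t) \<and> k = j}
       = {(s, k). cycle_state (fds_prod A B) ((fds_prod A B ^^ k) s)}"
    proof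
      show "?f ` {((s,k),(t,j)). cycle_state A ((A ^^ k) s) \<and> cycle_state B ((B ^^ j) t) \<and> k = j}
       \<subseteq> {(s, k). cycle_state (fds_prod A B) ((fds_prod A B ^^ k) s)}"
        by (auto simp: funpow_prod cycle_prod)
    next
      show "{(s, k). cycle_state (fds_prod A B) ((fds_prod A B ^^ k) s)} \<subseteq>
         ?f ` {((s,k),(t,j)). cycle_state A ((A ^^ k) s) \<and> cycle_state B ((B ^^ j) t) \<and> k = j}"
      proof
        fix x assume "x \<in> {(s, k). cycle_state (fds_prod A B) ((fds_prod A B ^^ k) s)}"
        then obtain s t k where x: "x = ((s,t),k)" "cycle_state A ((A ^^ k) s)" "cycle_state B ((B ^^ k) t)"
          by (auto simp: funpow_prod cycle_prod)
        then show "x \<in> ?f ` {((s,k),(t,j)). cycle_state A ((A ^^ k) s) \<and> cycle_state B ((B ^^ j) t) \<and> k = j}"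
          by (auto intro!: image_eqI[where x="((s,k),(t,k))"])
      qed
    qed
  qed
next
  fix x y
  assume x: "x \<in> verts (forest_prod (unrolling A) (unrolling B))"
    and y: "y \<in> verts (forest_prod (unrolling A) (unrolling B))"
  obtain s k t where xe: "x = ((s,k),(t,k))" "cycle_state A ((A ^^ k) s)" "cycle_state B ((B ^^ k) t)"
    using x unfolding verts_prod by auto
  obtain s' k' t' where ye: "y = ((s',k'),(t',k'))" "cycle_state A ((A ^^ k') s')" "cycle_state B ((B ^^ k') t')"
    using y unfolding verts_prod by auto
  show "(x, y) \<in> arcs (forest_prod (unrolling A) (unrolling B)) \<longleftrightarrow>
    ((\<lambda>((s,k),(t,j)). ((s,t),k)) x, (\<lambda>((s,k),(t,j)). ((s,t),k)) y) \<in> arcs (unrolling (fds_prod A B))"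
    using x y xe ye
    by (auto simp: arcs_prod arcs_unr funpow_prod cycle_prod fds_prod_apply)
qed

end
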